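(* Let $n\ge1$, $q$ a prime power, $s\in\mathbb{F}_q$, and let $(\mathsf{Enc},\mathcal{A})$ be an $n$-party one-round aggregation protocol over $\mathbb{F}_q$ with encoder $\mathsf{Enc}:\mathbb{F}_q\to[\ell]^m$. For every $\mathbf{y}\in[\ell]^{nm}$, the set $\mathrm{Inv}_{\mathbf{y}}=\{\mathbf{x}\in\mathcal{B}_s:\Pr_{Y\sim\mathcal{S}^{\mathsf{Enc}}_{\mathbf{x}}}[Y=\mathbf{y}]>0\}$ satisfies $|\mathrm{Inv}_{\mathbf{y}}|\le n^{nm}$.
   Context: $\mathcal{B}_s=\{\mathbf{x}\in\mathbb{F}_q^n:\sum_ix_i=s\}$. An $n$-party one-round aggregation protocol over $\mathbb{F}_q$ with $m$ messages per party consists of a randomized encoder $\mathsf{Enc}:\mathbb{F}_q\to[\ell]^m$ (for some positive integer $\ell$; each party applies it to its input with independent randomness) and an analyzer $\mathcal{A}:[\ell]^{nm}\to\mathbb{F}_q$ such that for every $\mathbf{x}\in\mathbb{F}_q^n$, every possible realization of the encodings $\mathsf{Enc}(x_1),\dots,\mathsf{Enc}(x_n)$, and every permutation $\pi$ of $[nm]$, the analyzer applied to the concatenation $(\mathsf{Enc}(x_1),\dots,\mathsf{Enc}(x_n))$ with coordinates permuted by $\pi$ outputs $\sum_i x_i$. $\mathcal{S}^{\mathsf{Enc}}_{\mathbf{x}}$ is the distribution on $[\ell]^{nm}$ of this concatenation after applying an independent uniformly random permutation of the $nm$ coordinates. *)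

theory Defs
  imports "HOL-Probability.Probability"
begin

text \<open>Inputs x in F_q^n are lists of length n; messages in [l] = {1..l} are naturals;
  an encoding Enc(a) in [l]^m is a list of length m.  The randomized encoder is a pmf.\<close>

fun encs :: "('a \<Rightarrow> 'b list pmf) \<Rightarrow> 'a list \<Rightarrow> 'b list list pmf" where
  "encs E [] = return_pmf []"
| "encs E (x # xs) = bind_pmf (E x) (\<lambda>e. bind_pmf (encs E xs) (\<lambda>es. return_pmf (e # es)))"

definition permute_list_by :: "(nat \<Rightarrow> nat) \<Rightarrow> 'b list \<Rightarrow> 'b list" where
  "permute_list_by p w = map (\<lambda>i. w ! p i) [0..<length w]"

definition B_set :: "nat \<Rightarrow> 'a::comm_monoid_add \<Rightarrow> 'a list set" where
  "B_set n s = {x. length x = n \<and> sum_list x = s}"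

definition is_aggregation_protocol ::
  "nat \<Rightarrow> nat \<Rightarrow> nat \<Rightarrow> ('a::field \<Rightarrow> nat list pmf) \<Rightarrow> (nat list \<Rightarrow> 'a) \<Rightarrow> bool" where
  "is_aggregation_protocol n m l Enc A \<longleftrightarrow>
     (\<forall>a. \<forall>e \<in> set_pmf (Enc a). length e = m \<and> set e \<subseteq> {1..l}) \<and>
     (\<forall>x es p. length x = n \<longrightarrow> length es = n \<longrightarrow>
        (\<forall>i<n. es ! i \<in> set_pmf (Enc (x ! i))) \<longrightarrow>
        p permutes {0..<n*m} \<longrightarrow>
        A (permute_list_by p (concat es)) = sum_list x)"

definition shuffled :: "nat \<Rightarrow> nat \<Rightarrow> ('a \<Rightarrow> nat list pmf) \<Rightarrow> 'a list \<Rightarrow> nat list pmf" where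
  "shuffled n m Enc x =
     bind_pmf (encs Enc x) (\<lambda>es.
       bind_pmf (pmf_of_set {p. p permutes {0..<n*m}}) (\<lambda>p.
         return_pmf (permute_list_by p (concat es))))"

end

theory Submission imports Defs begin
lemma decomp: fixes n :: nat shows
  "(\<Sum>i<n. Ms i) = mset y \<Longrightarrow> \<exists>g. length g = length y \<and> set g \<subseteq> {0..<n} \<and>
     (\<forall>i<n. Ms i = mset (map fst (filter (\<lambda>p. snd p = i) (zip y g))))"
proof (induction y arbitrary: Ms)
  case Nil
  have "\<forall>i<n. Ms i = {#}"
  proof (intro allI impI)
    fix i assume "i < n"
    then have "(\<Sum>i<n. Ms i) = Ms i + (\<Sum>j\<in>{..<n}-{i}. Ms j)" by (intro sum.remove) auto
    then show "Ms i = {#}" using Nil by simp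
  qed
  then show ?case by auto
next
  case (Cons a y)
  have c0: "count (\<Sum>i<n. Ms i) a > 0" using Cons.prems by simp
  have "\<exists>k<n. a \<in># Ms k"
  proof (rule ccontr)
    assume "\<not> ?thesis"
    then have "\<forall>k\<in>{..<n}. count (Ms k) a = 0" by (auto simp: count_eq_zero_iff)
    then have "count (\<Sum>i<n. Ms i) a = 0" by (simp add: count_sum)
    with c0 show False by simp
  qed
  then obtain k where k: "k < n" "a \<in># Ms k" by auto
  define Ms' where "Ms' = Ms(k := Ms k - {#a#})"
  have s1: "(\<Sum>i<n. Ms i) = Ms k + (\<Sum>i\<in>{..<n}-{k}. Ms i)"
    using k(1) by (intro sum.remove) auto
  have s2: "(\<Sum>i<n. Ms' i) = Ms' k + (\<Sum>i\<in>{..<n}-{k}. Ms' i)"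
    using k(1) by (intro sum.remove) auto
  have s3: "(\<Sum>i\<in>{..<n}-{k}. Ms' i) = (\<Sum>i\<in>{..<n}-{k}. Ms i)"
    by (rule sum.cong) (auto simp: Ms'_def)
  have mk: "Ms k = add_mset a (Ms' k)" using k(2) by (simp add: Ms'_def)
  have "add_mset a (\<Sum>i<n. Ms' i) = add_mset a (mset y)"
  proof -
    have "add_mset a (\<Sum>i<n. Ms' i) = Ms k + (\<Sum>i\<in>{..<n}-{k}. Ms i)"
      unfolding s2 s3 mk by simp
    also have "\<dots> = add_mset a (mset y)" using s1 Cons.prems by simp
    finally show ?thesis .
  qed
  then have "(\<Sum>i<n. Ms' i) = mset y" by simp
  from Cons.IH[OF this] obtain g where g: "length g = length y" "set g \<subseteq> {0..<n}"
    "\<forall>i<n. Ms' i = mset (map fst (filter (\<lambda>p. snd p = i) (zip y g)))" by blast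
  show ?case
  proof (intro exI[of _ "k # g"] conjI allI impI)
    fix i assume i: "i < n"
    show "Ms i = mset (map fst (filter (\<lambda>p. snd p = i) (zip (a # y) (k # g))))"
    proof (cases "i = k")
      case True
      have "Ms' k = mset (map fst (filter (\<lambda>p. snd p = k) (zip y g)))" using g(3) k(1) by blast
      then show ?thesis using True mk by simp
    next
      case False
      have "Ms' i = mset (map fst (filter (\<lambda>p. snd p = i) (zip y g)))" using g(3) i by blast
      moreover have "Ms' i = Ms i" using False by (simp add: Ms'_def)
      ultimately show ?thesis using False by simp
    qed
  qed (use g k in auto)
qed


lemma encs_set:
  "es \<in> set_pmf (encs E x) \<Longrightarrow> length es = length x \<and> (\<forall>i<length x. es!i \<in> set_pmf (E (x!i)))"
proof (induction x arbitrary: es)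
  case Nil then show ?case by simp
next
  case (Cons a x)
  then obtain e es' where "e \<in> set_pmf (E a)" "es' \<in> set_pmf (encs E x)" "es = e # es'" by auto
  with Cons.IH[of es'] show ?case by (auto simp: nth_Cons split: nat.splits)
qed

lemma concat_update_mset:
  "k < length xs \<Longrightarrow> mset v = mset (xs!k) \<Longrightarrow> mset (concat (xs[k:=v])) = mset (concat xs)"
proof (induction xs arbitrary: k)
  case Nil then show ?case by simp
next
  case (Cons a xs) then show ?case by (cases k) auto
qed

lemma sum_list_upd:
  fixes xs :: "'a::ab_group_add list"
  shows "k < length xs \<Longrightarrow> sum_list (xs[k:=v]) = sum_list xs + v - xs!k"
proof (induction xs arbitrary: k)
  case Nil then show ?case by simp
next
  case (Cons a xs) then show ?case by (cases k) (auto simp: algebra_simps)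
qed

theorem mainTheorem12:
  fixes n m l :: nat
    and s :: "'a::{finite, field}"
    and Enc :: "'a \<Rightarrow> nat list pmf"
    and A :: "nat list \<Rightarrow> 'a"
    and y :: "nat list"
  assumes "n \<ge> 1"
    and "is_aggregation_protocol n m l Enc A"
    and "length y = n * m" and "set y \<subseteq> {1..l}"
  shows "card {x \<in> B_set n s. pmf (shuffled n m Enc x) y > 0} \<le> n ^ (n * m)"
proof -
  have P2: "\<And>x es p. length x = n \<Longrightarrow> length es = n \<Longrightarrow>
        (\<forall>i<n. es ! i \<in> set_pmf (Enc (x ! i))) \<Longrightarrow>
        p permutes {0..<n*m} \<Longrightarrow> A (permute_list_by p (concat es)) = sum_list x"
    using assms(2) unfolding is_aggregation_protocol_def by blast
  define S where "S = {x \<in> B_set n s. pmf (shuffled n m Enc x) y > 0}"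
  define good where "good = (\<lambda>x es. length es = n \<and> (\<forall>i<n. es!i \<in> set_pmf (Enc (x!i))) \<and> mset (concat es) = mset y)"
  have ex: "\<exists>es. good x es" and lx: "length x = n" if "x \<in> S" for x
  proof -
    from that have lx: "length x = n" "y \<in> set_pmf (shuffled n m Enc x)"
      by (auto simp: S_def B_set_def set_pmf_iff)
    have fin: "finite {p. p permutes {0..<n*m}}" by (rule finite_permutations) simp
    have ne: "{p. p permutes {0..<n*m}} \<noteq> {}" using permutes_id by blast
    from lx(2) obtain es p where es: "es \<in> set_pmf (encs Enc x)" and p: "p permutes {0..<n*m}"
      and yd: "y = permute_list_by p (concat es)"
      unfolding shuffled_def using fin ne by (auto simp: set_pmf_of_set)
    from encs_set[OF es] lx have es2: "length es = n" "\<forall>i<n. es!i \<in> set_pmf (Enc (x!i))" by auto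
    have ly: "length (concat es) = n * m" using yd assms(3) by (simp add: permute_list_by_def)
    have "y = permute_list p (concat es)" using yd by (simp add: permute_list_by_def permute_list_def)
    moreover have "p permutes {..<length (concat es)}" using p ly by (simp add: atLeast0LessThan)
    ultimately have "mset y = mset (concat es)" by simp
    with es2 show "\<exists>es. good x es" unfolding good_def by auto
    show "length x = n" by fact
  qed
  define E where "E x = (SOME es. good x es)" for x
  have gE: "good x (E x)" if "x \<in> S" for x using someI_ex[OF ex[OF that]] unfolding E_def .
  define \<Phi> where "\<Phi> x = (\<lambda>i. if i < n then mset (E x ! i) else {#})" for x
  define G where "G g = (\<lambda>i. if i < n then mset (map fst (filter (\<lambda>p. snd p = i) (zip y g))) else {#})" for g
  define L where "L = {g. set g \<subseteq> {0..<n} \<and> length g = n * m}"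
  have img: "\<Phi> ` S \<subseteq> G ` L"
  proof
    fix u assume "u \<in> \<Phi> ` S"
    then obtain x where x: "x \<in> S" "u = \<Phi> x" by auto
    have g: "good x (E x)" by (rule gE[OF x(1)])
    have "(\<Sum>i<n. mset (E x ! i)) = sum_list (map mset (E x))"
      using g unfolding good_def by (simp add: sum_list_sum_nth atLeast0LessThan)
    also have "\<dots> = mset y" using g unfolding good_def by (simp add: mset_concat)
    finally obtain gg where gg: "length gg = length y" "set gg \<subseteq> {0..<n}"
      "\<forall>i<n. mset (E x ! i) = mset (map fst (filter (\<lambda>p. snd p = i) (zip y gg)))"
      using decomp by blast
    have "gg \<in> L" using gg assms(3) by (simp add: L_def)
    moreover have "u = G gg" using gg(3) x(2) by (auto simp: \<Phi>_def G_def)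
    ultimately show "u \<in> G ` L" by blast
  qed
  have inj: "inj_on \<Phi> S"
  proof (rule inj_onI)
    fix x x' assume x: "x \<in> S" and x': "x' \<in> S" and eq: "\<Phi> x = \<Phi> x'"
    have g: "good x (E x)" and g': "good x' (E x')" using gE x x' by auto
    have me: "mset (E x ! i) = mset (E x' ! i)" if "i < n" for i
      using fun_cong[OF eq, of i] that by (simp add: \<Phi>_def)
    have l: "length x = n" "length x' = n" using lx x x' by auto
    have sx: "A y = sum_list x" if gd: "good x es" "length x = n" for x es
    proof -
      have "length (concat es) = length y" using gd(1) unfolding good_def by (metis mset_eq_length)
      obtain p where p: "p permutes {..<length (concat es)}" "permute_list p (concat es) = y"
        using mset_eq_permutation[of y "concat es"] gd(1) unfolding good_def by metis
      have "p permutes {0..<n*m}" using p(1) \<open>length (concat es) = length y\<close> assms(3)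
        by (simp add: atLeast0LessThan)
      moreover have "permute_list_by p (concat es) = y" using p(2)
        by (simp add: permute_list_by_def permute_list_def)
      ultimately show ?thesis using P2[of x es p] gd unfolding good_def by auto
    qed
    show "x = x'"
    proof (rule nth_equalityI)
      show "length x = length x'" using l by simp
      fix k assume k: "k < length x"
      define es where "es = (E x)[k := E x' ! k]"
      define z where "z = x[k := x' ! k]"
      have "good z es"
        unfolding good_def
      proof (intro conjI allI impI)
        show "length es = n" using g by (simp add: es_def good_def)
        fix i assume i: "i < n"
        show "es ! i \<in> set_pmf (Enc (z ! i))"
          using g g' i k l unfolding good_def es_def z_def
          by (cases "i = k") auto
      next
        have "mset (concat es) = mset (concat (E x))"
          unfolding es_def using k l g me[of k] by (intro concat_update_mset) (auto simp: good_def)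
        then show "mset (concat es) = mset y" using g by (simp add: good_def)
      qed
      then have "A y = sum_list z" using sx l by (simp add: z_def)
      moreover have "A y = sum_list x" using sx g l by simp
      ultimately have "sum_list x + x' ! k - x ! k = sum_list x"
        using sum_list_upd[OF k, of "x' ! k"] by (simp add: z_def)
      then show "x ! k = x' ! k" by simp
    qed
  qed
  have "card S = card (\<Phi> ` S)" using inj by (simp add: card_image)
  also have "\<dots> \<le> card (G ` L)"
    by (rule card_mono[OF _ img]) (simp add: L_def finite_lists_length_eq)
  also have "\<dots> \<le> card L" by (rule card_image_le) (simp add: L_def finite_lists_length_eq)
  also have "\<dots> = n ^ (n * m)" by (simp add: L_def card_lists_length_eq)
  finally show ?thesis unfolding S_def .
qed

end
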